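(* For $i=1,2$ let $P_i,R_i$ be $\mathrm{Sym}(n,\mathbb{R})$-valued and $Q_i$ be $\mathrm{Mat}(n,\mathbb{R})$-valued $C^1$ functions, defined on $\mathbb{R}^+=[0,\infty)$ for $i=1$ and on $\mathbb{R}^-=(-\infty,0]$ for $i=2$, each satisfying (F2), and such that $K_i(t)=\begin{bmatrix}P_i(t)&Q_i(t)\\Q_i(t)^T&R_i(t)\end{bmatrix}$ is positive definite for every $t$ in the respective domain. Let $\mathscr A^+_{1,M}=-\frac{d}{dt}(P_1\frac{d}{dt}+Q_1)+Q_1^T\frac{d}{dt}+R_1$ on $W^{2,2}(\mathbb{R}^+,\mathbb{R}^n)\subset L^2(\mathbb{R}^+,\mathbb{R}^n)$ and $\mathscr A^-_{2,M}=-\frac{d}{dt}(P_2\frac{d}{dt}+Q_2)+Q_2^T\frac{d}{dt}+R_2$ on $W^{2,2}(\mathbb{R}^-,\mathbb{R}^n)\subset L^2(\mathbb{R}^-,\mathbb{R}^n)$. Then the system $\mathscr A^+_{1,M}x_1=0$, $\mathscr A^-_{2,M}x_2=0$, $x_1(0)=x_2(0)$, $P_1(0)\dot x_1(0)+Q_1(0)x_1(0)=P_2(0)\dot x_2(0)+Q_2(0)x_2(0)$ has only the zero solution.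
   Context: (F2) for coefficients $P,Q,R$ on a half-line: the limits at the infinite end exist and there are $C_1,C_2,C_3>0$ with $\langle P(t)v,v\rangle\ge C_1|v|^2$, $|P(t)v|\ge C_1|v|$, $|Q(t)v|\le C_2|v|$, $|R(t)v|\le C_3|v|$ for all $t,v$. *)

theory Defs
  imports "HOL-Analysis.Analysis"
begin

definition C1_on :: "real set \<Rightarrow> (real \<Rightarrow> 'a::real_normed_vector) \<Rightarrow> bool" where
  "C1_on S f \<longleftrightarrow> (\<exists>f'. continuous_on S f' \<and>
      (\<forall>t\<in>S. (f has_vector_derivative f' t) (at t within S)))"

definition sym_valued :: "real set \<Rightarrow> (real \<Rightarrow> real^'n^'n) \<Rightarrow> bool" where
  "sym_valued S P \<longleftrightarrow> (\<forall>t\<in>S. transpose (P t) = P t)"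

definition block_mat :: "real^'n^'n \<Rightarrow> real^'n^'n \<Rightarrow> real^'n^'n \<Rightarrow> real^('n + 'n)^('n + 'n)" where
  "block_mat P Q R = (\<chi> i j. (case i of
      Inl a \<Rightarrow> (case j of Inl b \<Rightarrow> P $ a $ b | Inr b \<Rightarrow> Q $ a $ b)
    | Inr a \<Rightarrow> (case j of Inl b \<Rightarrow> Q $ b $ a | Inr b \<Rightarrow> R $ a $ b)))"

definition pos_def :: "real^'m^'m \<Rightarrow> bool" where
  "pos_def M \<longleftrightarrow> transpose M = M \<and> (\<forall>x. x \<noteq> 0 \<longrightarrow> x \<bullet> (M *v x) > 0)"

text \<open>Condition (F2); F is the filter at the infinite end (at_top or at_bot).\<close>
definition F2 :: "real set \<Rightarrow> real filter \<Rightarrow> (real \<Rightarrow> real^'n^'n) \<Rightarrow> (real \<Rightarrow> real^'n^'n)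
    \<Rightarrow> (real \<Rightarrow> real^'n^'n) \<Rightarrow> bool" where
  "F2 S F P Q R \<longleftrightarrow>
     (\<exists>L. (P \<longlongrightarrow> L) F) \<and> (\<exists>L. (Q \<longlongrightarrow> L) F) \<and> (\<exists>L. (R \<longlongrightarrow> L) F) \<and>
     (\<exists>C1 C2 C3. C1 > 0 \<and> C2 > 0 \<and> C3 > 0 \<and>
        (\<forall>t\<in>S. \<forall>v. (P t *v v) \<bullet> v \<ge> C1 * norm v ^ 2 \<and> norm (P t *v v) \<ge> C1 * norm v \<and>
                   norm (Q t *v v) \<le> C2 * norm v \<and> norm (R t *v v) \<le> C3 * norm v))"

text \<open>x (with derivatives x', x'') is an element of W^{2,2}(S) solving
  -(P x' + Q x)' + Q^T x' + R x = 0 on S.\<close>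
definition W22_solution :: "real set \<Rightarrow> (real \<Rightarrow> real^'n^'n) \<Rightarrow> (real \<Rightarrow> real^'n^'n)
    \<Rightarrow> (real \<Rightarrow> real^'n^'n) \<Rightarrow> (real \<Rightarrow> real^'n) \<Rightarrow> (real \<Rightarrow> real^'n) \<Rightarrow> (real \<Rightarrow> real^'n) \<Rightarrow> bool" where
  "W22_solution S P Q R x x' x'' \<longleftrightarrow>
     (\<forall>t\<in>S. (x has_vector_derivative x' t) (at t within S) \<and>
             (x' has_vector_derivative x'' t) (at t within S) \<and>
             ((\<lambda>s. P s *v x' s + Q s *v x s) has_vector_derivative
                 (transpose (Q t) *v x' t + R t *v x t)) (at t within S)) \<and>
     (\<lambda>t. norm (x t) ^ 2) integrable_on S \<and>
     (\<lambda>t. norm (x' t) ^ 2) integrable_on S \<and>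
     (\<lambda>t. norm (x'' t) ^ 2) integrable_on S"

end

theory Submission imports Defs begin
lemma matvec_bound:
  fixes A :: "real^'n^'m"
  shows "norm (A *v x) \<le> real CARD('m) * real CARD('n) * norm A * norm x"
proof -
  have "\<And>i j. abs(A$i$j) \<le> norm A"
    by (meson component_le_norm_cart Finite_Cartesian_Product.norm_nth_le order_trans)
  then have o: "onorm((*v) A) \<le> real CARD('m) * real CARD('n) * norm A"
    by (rule onorm_le_matrix_component)
  have "norm (A *v x) \<le> onorm((*v) A) * norm x"
    by (rule onorm) simp
  also have "\<dots> \<le> real CARD('m) * real CARD('n) * norm A * norm x"
    using o by (simp add: mult_right_mono)
  finally show ?thesis .
qed

lemma block_quad:
  fixes P Q R :: "real^'n^'n" and u w :: "real^'n"
  defines "z \<equiv> (\<chi> i. case i of Inl a \<Rightarrow> u $ a | Inr a \<Rightarrow> w $ a) :: real^('n+'n)"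
  shows "z \<bullet> (block_mat P Q R *v z) = u \<bullet> (P *v u + Q *v w) + w \<bullet> (transpose Q *v u + R *v w)"
proof -
  have sp: "\<And>g::('n+'n) \<Rightarrow> real. sum g UNIV = sum (\<lambda>a. g (Inl a)) UNIV + sum (\<lambda>a. g (Inr a)) UNIV"
    proof -
    fix g :: "('n+'n) \<Rightarrow> real"
    have "sum g (UNIV <+> UNIV) = sum (g \<circ> Inl) UNIV + sum (g \<circ> Inr) UNIV"
      by (rule sum.Plus) simp_all
    then show "sum g UNIV = sum (\<lambda>a. g (Inl a)) UNIV + sum (\<lambda>a. g (Inr a)) UNIV"
      by (simp add: comp_def)
  qed
  show ?thesis
  unfolding z_def block_mat_def
  by (simp add: inner_vec_def matrix_vector_mult_def transpose_def sp
       sum_distrib_left sum.distrib algebra_simps)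
qed

lemma sol_deriv:
  fixes P Q R :: "real \<Rightarrow> real^'n^'n" and x x' x'' :: "real \<Rightarrow> real^'n"
  assumes "W22_solution S P Q R x x' x''" "t \<in> S"
  shows "((\<lambda>s. x s \<bullet> (P s *v x' s + Q s *v x s)) has_real_derivative
     (x' t \<bullet> (P t *v x' t + Q t *v x t) + x t \<bullet> (transpose (Q t) *v x' t + R t *v x t))) (at t within S)"
proof -
  have d1: "(x has_vector_derivative x' t) (at t within S)"
   and d2: "((\<lambda>s. P s *v x' s + Q s *v x s) has_vector_derivative
                 (transpose (Q t) *v x' t + R t *v x t)) (at t within S)"
    using assms unfolding W22_solution_def by auto
  have "((\<lambda>s. x s \<bullet> (P s *v x' s + Q s *v x s)) has_derivative
     (\<lambda>h. x t \<bullet> (h *\<^sub>R (transpose (Q t) *v x' t + R t *v x t)) + (h *\<^sub>R x' t) \<bullet> (P t *v x' t + Q t *v x t))) (at t within S)"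
    using d1 d2 unfolding has_vector_derivative_def by (rule has_derivative_inner)
  then show ?thesis
    unfolding has_field_derivative_def
    by (rule has_derivative_eq_rhs) (auto simp: fun_eq_iff algebra_simps inner_commute)
qed

lemma quad_nonneg:
  fixes P Q R :: "real^'n^'n" and u w :: "real^'n"
  assumes "pos_def (block_mat P Q R)"
  shows "u \<bullet> (P *v u + Q *v w) + w \<bullet> (transpose Q *v u + R *v w) \<ge> 0"
    and "u \<bullet> (P *v u + Q *v w) + w \<bullet> (transpose Q *v u + R *v w) = 0 \<Longrightarrow> w = 0"
proof -
  define z :: "real^('n+'n)" where "z = (\<chi> i. case i of Inl a \<Rightarrow> u $ a | Inr a \<Rightarrow> w $ a)"
  have q: "z \<bullet> (block_mat P Q R *v z) = u \<bullet> (P *v u + Q *v w) + w \<bullet> (transpose Q *v u + R *v w)"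
    unfolding z_def by (rule block_quad)
  have pd: "z \<noteq> 0 \<Longrightarrow> z \<bullet> (block_mat P Q R *v z) > 0" using assms unfolding pos_def_def by auto
  show "u \<bullet> (P *v u + Q *v w) + w \<bullet> (transpose Q *v u + R *v w) \<ge> 0"
    using pd q by (cases "z = 0") auto
  assume 0: "u \<bullet> (P *v u + Q *v w) + w \<bullet> (transpose Q *v u + R *v w) = 0"
  then have "z = 0" using pd q by fastforce
  show "w = 0"
  proof (rule vec_eq_iff[THEN iffD2], rule allI)
    fix a
    have "z $ Inr a = w $ a" unfolding z_def by simp
    then show "w $ a = 0 $ a" using \<open>z = 0\<close> by simp
  qed
qed

lemma mono_from_deriv:
  fixes f D :: "real \<Rightarrow> real"
  assumes "\<And>t. t \<in> S \<Longrightarrow> (f has_real_derivative D t) (at t within S)"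
    and "\<And>t. t \<in> S \<Longrightarrow> D t \<ge> 0" and "a \<le> b" and "{a..b} \<subseteq> S"
  shows "f a \<le> f b"
proof -
  have "\<exists>x\<in>{a..b}. f b - f a = (\<lambda>h. h * D x) (b - a)"
  proof (rule mvt_very_simple[OF \<open>a \<le> b\<close>])
    fix x assume "a \<le> x" "x \<le> b"
    then have "x \<in> S" using assms(4) by auto
    have "(f has_real_derivative D x) (at x within {a..b})"
      using assms(1)[OF \<open>x \<in> S\<close>] assms(4) by (rule DERIV_subset)
    then show "(f has_derivative (\<lambda>h. h * D x)) (at x within {a..b})"
      by (simp add: has_field_derivative_def mult_commute_abs)
  qed
  then obtain x where "x \<in> {a..b}" "f b - f a = (b - a) * D x" by (auto simp: mult.commute)
  moreover have "D x \<ge> 0" using assms(2,4) \<open>x \<in> {a..b}\<close> by auto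
  ultimately show ?thesis using \<open>a \<le> b\<close> by (metis diff_ge_0_iff_ge mult_nonneg_nonneg)
qed

lemma core_top:
  fixes g :: "real \<Rightarrow> real"
  assumes "g integrable_on {0..}" "\<And>t. t \<ge> 0 \<Longrightarrow> g t \<ge> 0" "c > 0" "T \<ge> 0"
    "\<And>t. t \<ge> T \<Longrightarrow> c \<le> g t"
  shows False
proof -
  obtain n :: nat where n: "integral {0..} g < c * real n"
    using reals_Archimedean3[OF \<open>c > 0\<close>] by (metis mult.commute)
  have sub: "{T..T + real n} \<subseteq> {0..}" using assms(4) by auto
  have ig: "g integrable_on {T..T + real n}" using integrable_on_subinterval[OF assms(1) sub] .
  have "c * real n = integral {T..T + real n} (\<lambda>_. c)" by simp
  also have "\<dots> \<le> integral {T..T + real n} g"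
    by (rule integral_le) (use ig assms(5) in auto)
  also have "\<dots> \<le> integral {0..} g"
    by (rule integral_subset_le[OF sub ig assms(1)]) (use assms(2) in auto)
  finally show False using n by simp
qed

lemma core_bot:
  fixes g :: "real \<Rightarrow> real"
  assumes "g integrable_on {..0}" "\<And>t. t \<le> 0 \<Longrightarrow> g t \<ge> 0" "c > 0" "T \<le> 0"
    "\<And>t. t \<le> T \<Longrightarrow> c \<le> g t"
  shows False
proof -
  obtain n :: nat where n: "integral {..0} g < c * real n"
    using reals_Archimedean3[OF \<open>c > 0\<close>] by (metis mult.commute)
  have sub: "{T - real n..T} \<subseteq> {..0}" using assms(4) by auto
  have ig: "g integrable_on {T - real n..T}" using integrable_on_subinterval[OF assms(1) sub] .
  have "c * real n = integral {T - real n..T} (\<lambda>_. c)" by simp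
  also have "\<dots> \<le> integral {T - real n..T} g"
    by (rule integral_le) (use ig assms(5) in auto)
  also have "\<dots> \<le> integral {..0} g"
    by (rule integral_subset_le[OF sub ig assms(1)]) (use assms(2) in auto)
  finally show False using n by simp
qed


lemma pointwise_bound:
  fixes A Qm :: "real^'n^'n" and u v :: "real^'n"
  assumes "\<And>y. norm (A *v y) \<le> B * norm y" "\<And>y. norm (Qm *v y) \<le> C * norm y" "B \<ge> 0" "C \<ge> 0"
  shows "\<bar>u \<bullet> (A *v v + Qm *v u)\<bar> \<le> (B + C) * (norm u ^ 2 + norm v ^ 2)"
proof -
  have "\<bar>u \<bullet> (A *v v + Qm *v u)\<bar> \<le> norm u * norm (A *v v + Qm *v u)"
    by (rule Cauchy_Schwarz_ineq2)
  also have "\<dots> \<le> norm u * (B * norm v + C * norm u)"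
    by (rule mult_left_mono) (simp_all add: norm_triangle_le add_mono assms(1,2))
  also have "\<dots> = B * (norm u * norm v) + C * norm u ^ 2" by (simp add: algebra_simps power2_eq_square)
  also have "\<dots> \<le> B * (norm u ^ 2 + norm v ^ 2) + C * (norm u ^ 2 + norm v ^ 2)"
  proof (rule add_mono)
    have h: "2 * (norm u * norm v) \<le> norm u ^ 2 + norm v ^ 2"
      using power2_diff[of "norm u" "norm v"] zero_le_power2[of "norm u - norm v"] by linarith
    have "norm u * norm v \<le> norm u ^ 2 + norm v ^ 2"
      using h mult_nonneg_nonneg[OF norm_ge_zero norm_ge_zero, of u v] by linarith
    then show "B * (norm u * norm v) \<le> B * (norm u ^ 2 + norm v ^ 2)" using assms(3) by (rule mult_left_mono)
    show "C * norm u ^ 2 \<le> C * (norm u ^ 2 + norm v ^ 2)" using assms(4) by (simp add: mult_left_mono)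
  qed
  finally show ?thesis by (simp add: algebra_simps)
qed

lemma tail_bound:
  fixes P Q R :: "real \<Rightarrow> real^'n^'n" and x x' x'' :: "real \<Rightarrow> real^'n"
  assumes "F2 S F P Q R" "W22_solution S P Q R x x' x''"
  shows "\<exists>g. g integrable_on S \<and> (\<forall>t\<in>S. 0 \<le> g t) \<and>
     (\<forall>\<^sub>F t in F. t \<in> S \<longrightarrow> \<bar>x t \<bullet> (P t *v x' t + Q t *v x t)\<bar> \<le> g t)"
proof -
  obtain L C1 C2 C3 where L: "(P \<longlongrightarrow> L) F" and C: "C2 > 0"
    "\<forall>t\<in>S. \<forall>v. norm (Q t *v v) \<le> C2 * norm v"
    using assms(1) unfolding F2_def by blast
  have i1: "(\<lambda>t. norm (x t) ^ 2) integrable_on S" and i2: "(\<lambda>t. norm (x' t) ^ 2) integrable_on S"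
    using assms(2) unfolding W22_solution_def by auto
  define B where "B = real CARD('n) * real CARD('n) * (norm L + 1)"
  have B0: "B \<ge> 0" unfolding B_def by simp
  have ev: "\<forall>\<^sub>F t in F. dist (P t) L < 1" using L tendstoD zero_less_one by blast
  define g where "g = (\<lambda>t. (B + C2) * (norm (x t) ^ 2 + norm (x' t) ^ 2))"
  have "g integrable_on S" unfolding g_def
    using integrable_on_cmult_left[OF integrable_add[OF i1 i2], of "B + C2"] by simp
  moreover have "\<forall>t\<in>S. 0 \<le> g t" unfolding g_def using B0 C by simp
  moreover have "\<forall>\<^sub>F t in F. t \<in> S \<longrightarrow> \<bar>x t \<bullet> (P t *v x' t + Q t *v x t)\<bar> \<le> g t"
    using ev
  proof eventually_elim
    case (elim t)
    show ?case
    proof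
      assume "t \<in> S"
      have nP: "norm (P t) \<le> norm L + 1" using elim norm_triangle_sub[of "P t" L]
        by (simp add: dist_norm)
      have bP: "norm (P t *v y) \<le> B * norm y" for y
      proof -
        have "norm (P t *v y) \<le> real CARD('n) * real CARD('n) * norm (P t) * norm y" by (rule matvec_bound)
        also have "\<dots> \<le> B * norm y" unfolding B_def
          by (intro mult_right_mono mult_left_mono nP) auto
        finally show ?thesis .
      qed
      have "\<bar>x t \<bullet> (P t *v x' t + Q t *v x t)\<bar> \<le> (B + C2) * (norm (x t) ^ 2 + norm (x' t) ^ 2)"
        by (rule pointwise_bound) (use bP C \<open>t \<in> S\<close> B0 in auto)
      then show "\<bar>x t \<bullet> (P t *v x' t + Q t *v x t)\<bar> \<le> g t" unfolding g_def .
    qed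
  qed
  ultimately show ?thesis by blast
qed


lemma deriv_zero:
  fixes f :: "real \<Rightarrow> real"
  assumes "(f has_real_derivative D) (at t within S)" "\<forall>s\<in>S. f s = 0" "a < b" "t \<in> {a..b}" "{a..b} \<subseteq> S"
  shows "D = 0"
proof -
  have "(f has_real_derivative D) (at t within {a..b})" using assms(1,5) by (rule DERIV_subset)
  then have "((\<lambda>_. 0) has_real_derivative D) (at t within {a..b})"
    by (rule has_field_derivative_transform_within[where d=1]) (use assms in auto)
  then have v1: "((\<lambda>_. 0::real) has_vector_derivative D) (at t within cbox a b)"
    by (simp add: has_real_derivative_iff_has_vector_derivative cbox_interval)
  have v2: "((\<lambda>_. 0::real) has_vector_derivative 0) (at t within cbox a b)"
    by (rule has_vector_derivative_const)
  show ?thesis using vector_derivative_unique_within_closed_interval[OF assms(3) _ v1 v2] assms(4)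
    by (simp add: cbox_interval)
qed


theorem lemma3p5:
  fixes P1 Q1 R1 P2 Q2 R2 :: "real \<Rightarrow> real^'n^'n"
    and x1 x1' x1'' x2 x2' x2'' :: "real \<Rightarrow> real^'n"
  assumes C1_1: "C1_on {0..} P1" "C1_on {0..} Q1" "C1_on {0..} R1"
    and C1_2: "C1_on {..0} P2" "C1_on {..0} Q2" "C1_on {..0} R2"
    and sym1: "sym_valued {0..} P1" "sym_valued {0..} R1"
    and sym2: "sym_valued {..0} P2" "sym_valued {..0} R2"
    and F2_1: "F2 {0..} at_top P1 Q1 R1"
    and F2_2: "F2 {..0} at_bot P2 Q2 R2"
    and K1: "\<forall>t\<in>{0..}. pos_def (block_mat (P1 t) (Q1 t) (R1 t))"
    and K2: "\<forall>t\<in>{..0}. pos_def (block_mat (P2 t) (Q2 t) (R2 t))"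
    and sol1: "W22_solution {0..} P1 Q1 R1 x1 x1' x1''"
    and sol2: "W22_solution {..0} P2 Q2 R2 x2 x2' x2''"
    and bc1: "x1 0 = x2 0"
    and bc2: "P1 0 *v x1' 0 + Q1 0 *v x1 0 = P2 0 *v x2' 0 + Q2 0 *v x2 0"
  shows "(\<forall>t\<in>{0..}. x1 t = 0) \<and> (\<forall>t\<in>{..0}. x2 t = 0)"
proof -
  define f1 where "f1 = (\<lambda>s. x1 s \<bullet> (P1 s *v x1' s + Q1 s *v x1 s))"
  define D1 where "D1 = (\<lambda>t. x1' t \<bullet> (P1 t *v x1' t + Q1 t *v x1 t) + x1 t \<bullet> (transpose (Q1 t) *v x1' t + R1 t *v x1 t))"
  define f2 where "f2 = (\<lambda>s. x2 s \<bullet> (P2 s *v x2' s + Q2 s *v x2 s))"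
  define D2 where "D2 = (\<lambda>t. x2' t \<bullet> (P2 t *v x2' t + Q2 t *v x2 t) + x2 t \<bullet> (transpose (Q2 t) *v x2' t + R2 t *v x2 t))"
  have d1: "\<And>t. t \<in> {0..} \<Longrightarrow> (f1 has_real_derivative D1 t) (at t within {0..})"
    unfolding f1_def D1_def by (rule sol_deriv[OF sol1])
  have d2: "\<And>t. t \<in> {..0} \<Longrightarrow> (f2 has_real_derivative D2 t) (at t within {..0})"
    unfolding f2_def D2_def by (rule sol_deriv[OF sol2])
  have D1nn: "\<And>t. t \<in> {0..} \<Longrightarrow> D1 t \<ge> 0"
    unfolding D1_def using K1 quad_nonneg(1) by blast
  have D2nn: "\<And>t. t \<in> {..0} \<Longrightarrow> D2 t \<ge> 0"
    unfolding D2_def using K2 quad_nonneg(1) by blast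
  have mono1: "\<And>a b. 0 \<le> a \<Longrightarrow> a \<le> b \<Longrightarrow> f1 a \<le> f1 b"
    by (rule mono_from_deriv[OF d1 D1nn]) auto
  have mono2: "\<And>a b. a \<le> b \<Longrightarrow> b \<le> 0 \<Longrightarrow> f2 a \<le> f2 b"
    by (rule mono_from_deriv[OF d2 D2nn]) auto
  have neg1: "f1 T \<le> 0" if "T \<ge> 0" for T
  proof (rule ccontr)
    assume c: "\<not> f1 T \<le> 0"
    obtain g where g: "g integrable_on {0..}" "\<forall>t\<in>{0..}. 0 \<le> g t"
      "\<forall>\<^sub>F t in at_top. t \<in> {0..} \<longrightarrow> \<bar>f1 t\<bar> \<le> g t"
      using tail_bound[OF F2_1 sol1] unfolding f1_def by blast
    obtain T0 where T0: "\<And>t. t \<ge> T0 \<Longrightarrow> t \<in> {0..} \<longrightarrow> \<bar>f1 t\<bar> \<le> g t"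
      using g(3) unfolding eventually_at_top_linorder by blast
    show False
    proof (rule core_top[OF g(1) _ _ _ ])
      show "\<And>t. 0 \<le> t \<Longrightarrow> 0 \<le> g t" using g(2) by auto
      show "0 < f1 T" using c by simp
      show "0 \<le> max T T0" using that by simp
      fix t assume "max T T0 \<le> t"
      then have "f1 T \<le> f1 t" "\<bar>f1 t\<bar> \<le> g t" using mono1 that T0 by auto
      then show "f1 T \<le> g t" by linarith
    qed
  qed
  have pos2: "f2 T \<ge> 0" if "T \<le> 0" for T
  proof (rule ccontr)
    assume c: "\<not> f2 T \<ge> 0"
    obtain g where g: "g integrable_on {..0}" "\<forall>t\<in>{..0}. 0 \<le> g t"
      "\<forall>\<^sub>F t in at_bot. t \<in> {..0} \<longrightarrow> \<bar>f2 t\<bar> \<le> g t"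
      using tail_bound[OF F2_2 sol2] unfolding f2_def by blast
    obtain T0 where T0: "\<And>t. t \<le> T0 \<Longrightarrow> t \<in> {..0} \<longrightarrow> \<bar>f2 t\<bar> \<le> g t"
      using g(3) unfolding eventually_at_bot_linorder by blast
    show False
    proof (rule core_bot[OF g(1) _ _ _ ])
      show "\<And>t. t \<le> 0 \<Longrightarrow> 0 \<le> g t" using g(2) by auto
      show "0 < - f2 T" using c by simp
      show "min T T0 \<le> 0" using that by simp
      fix t assume "t \<le> min T T0"
      then have "f2 t \<le> f2 T" "\<bar>f2 t\<bar> \<le> g t" using mono2 that T0 by auto
      then show "- f2 T \<le> g t" by linarith
    qed
  qed
  have eq0: "f1 0 = f2 0" unfolding f1_def f2_def using bc1 bc2 by simp
  have f10: "f1 0 = 0" using neg1[of 0] pos2[of 0] eq0 by simp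
  have f1z: "\<forall>s\<in>{0..}. f1 s = 0" using neg1 mono1 f10 by (metis atLeast_iff order_refl order_antisym)
  have f2z: "\<forall>s\<in>{..0}. f2 s = 0" using pos2 mono2 f10 eq0 by (metis atMost_iff order_refl order_antisym)
  have "\<forall>t\<in>{0..}. x1 t = 0"
  proof
    fix t :: real assume t: "t \<in> {0..}"
    have "D1 t = 0" by (rule deriv_zero[OF d1[OF t] f1z, of t "t+1"]) (use t in auto)
    then show "x1 t = 0" using K1 t quad_nonneg(2) unfolding D1_def by blast
  qed
  moreover have "\<forall>t\<in>{..0}. x2 t = 0"
  proof
    fix t :: real assume t: "t \<in> {..0}"
    have "D2 t = 0" by (rule deriv_zero[OF d2[OF t] f2z, of "t-1" t]) (use t in auto)
    then show "x2 t = 0" using K2 t quad_nonneg(2) unfolding D2_def by blast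
  qed
  ultimately show ?thesis by blast
qed

end
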